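(* Let $\mathcal A$ be a unital associative algebra over $\mathbb C$, $L\ge0$, and let $A,B,C\in\mathcal A$ satisfy $[A,B]=C$ and $[A,C]=\sum_{i=1}^{L+1}\alpha_iA^i+\delta B+\epsilon+\beta\{A,B\}$ for complex constants $\alpha_i,\beta,\delta,\epsilon$. Define numbers $x_{i,j},y_{i,j}$ for $j\ge1$, $0\le i\le j$, by $x_{0,1}=\beta$, $x_{1,1}=1$, $y_{0,1}=\delta$, $y_{1,1}=2\beta$ and, for $j\ge2$, $$x_{i,j}=x_{i-1,j-1}+\beta x_{i,j-1}+y_{i,j-1},\qquad y_{i,j}=\delta x_{i,j-1}+2\beta x_{i-1,j-1}+y_{i-1,j-1},$$ with the conventions $x_{-1,j}=y_{-1,j}=0$ and $x_{j+1,j}=y_{j+1,j}=0$ for all $j\ge1$. Then for all integers $m\ge\ell\ge1$, $$A^mCA^\ell+A^\ell CA^m=\sum_{i=0}^{\ell}x_{i,\ell}\{A^{m+i},C\}-\sum_{n=0}^{\ell}y_{n,\ell}[A^{m+n},B].$$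
   Context: $[X,Y]=XY-YX$, $\{X,Y\}=XY+YX$, $A^0=1$. *)

theory Defs
  imports Complex_Main
begin

definition complex_algebra :: "(complex \<Rightarrow> 'a::ring_1 \<Rightarrow> 'a) \<Rightarrow> bool" where
  "complex_algebra smul \<longleftrightarrow>
     (\<forall>a b x. smul (a + b) x = smul a x + smul b x) \<and>
     (\<forall>a x y. smul a (x + y) = smul a x + smul a y) \<and>
     (\<forall>a b x. smul (a * b) x = smul a (smul b x)) \<and>
     (\<forall>x. smul 1 x = x) \<and>
     (\<forall>a x y. smul a (x * y) = smul a x * y) \<and>
     (\<forall>a x y. smul a (x * y) = x * smul a y)"

definition comm :: "'a::ring \<Rightarrow> 'a \<Rightarrow> 'a" where
  "comm X Y = X * Y - Y * X"

definition acomm :: "'a::ring \<Rightarrow> 'a \<Rightarrow> 'a" where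
  "acomm X Y = X * Y + Y * X"

text \<open>The numbers x_{i,j} (xc beta delta i j) and y_{i,j} (yc beta delta i j),
  for j \<ge> 1, 0 \<le> i \<le> j; the value is 0 whenever i > j (convention
  x_{j+1,j} = y_{j+1,j} = 0), and x_{-1,j} = y_{-1,j} = 0 is encoded by the case i = 0.
  The values at j = 0 are unused.\<close>
fun xc :: "complex \<Rightarrow> complex \<Rightarrow> nat \<Rightarrow> nat \<Rightarrow> complex"
and yc :: "complex \<Rightarrow> complex \<Rightarrow> nat \<Rightarrow> nat \<Rightarrow> complex" where
  "xc \<beta> \<delta> i 0 = 0"
| "xc \<beta> \<delta> i (Suc 0) = (if i = 0 then \<beta> else if i = 1 then 1 else 0)"
| "xc \<beta> \<delta> i (Suc (Suc k)) =
     (if i > Suc (Suc k) then 0 else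
       (case i of 0 \<Rightarrow> 0 | Suc i' \<Rightarrow> xc \<beta> \<delta> i' (Suc k))
       + \<beta> * xc \<beta> \<delta> i (Suc k) + yc \<beta> \<delta> i (Suc k))"
| "yc \<beta> \<delta> i 0 = 0"
| "yc \<beta> \<delta> i (Suc 0) = (if i = 0 then \<delta> else if i = 1 then 2 * \<beta> else 0)"
| "yc \<beta> \<delta> i (Suc (Suc k)) =
     (if i > Suc (Suc k) then 0 else
       \<delta> * xc \<beta> \<delta> i (Suc k)
       + 2 * \<beta> * (case i of 0 \<Rightarrow> 0 | Suc i' \<Rightarrow> xc \<beta> \<delta> i' (Suc k))
       + (case i of 0 \<Rightarrow> 0 | Suc i' \<Rightarrow> yc \<beta> \<delta> i' (Suc k)))"

end

theory Submission
  imports Defs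
begin

context
  fixes smul :: "complex \<Rightarrow> 'a::ring_1 \<Rightarrow> 'a"
  assumes alg: "complex_algebra smul"
begin

lemma sm_add: "smul a (x + y) = smul a x + smul a y"
  using alg unfolding complex_algebra_def by blast
lemma sm_addc: "smul (a + b) x = smul a x + smul b x"
  using alg unfolding complex_algebra_def by blast
lemma sm_mult: "smul (a * b) x = smul a (smul b x)"
  using alg unfolding complex_algebra_def by blast
lemma sm_left: "smul a x * y = smul a (x * y)"
  using alg unfolding complex_algebra_def by metis
lemma sm_right: "x * smul a y = smul a (x * y)"
  using alg unfolding complex_algebra_def by metis
lemma sm_diff: "smul a (x - y) = smul a x - smul a y"
  using sm_add[of a "x - y" y] by (simp add: algebra_simps)
lemma sm_zero: "smul 0 x = 0"
  using sm_addc[of 0 0 x] by simp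
lemma sm_zero2: "smul a 0 = 0"
  using sm_add[of a 0 0] by simp

end

definition Rg :: "(complex \<Rightarrow> 'a \<Rightarrow> 'a) \<Rightarrow> 'a \<Rightarrow> 'a \<Rightarrow> 'a \<Rightarrow> (nat\<Rightarrow>complex) \<Rightarrow> (nat\<Rightarrow>complex) \<Rightarrow> nat \<Rightarrow> nat \<Rightarrow> 'a::ring_1" where
  "Rg smul A B C x y l m = (\<Sum>i=0..l. smul (x i) (acomm (A^(m+i)) C)) - (\<Sum>i=0..l. smul (y i) (comm (A^(m+i)) B))"

lemma I2:
  fixes A B C :: "'a::ring_1"
  assumes hC: "comm A B = C"
  shows "A * comm (A^k) B + comm (A^k) B * A - comm (A^Suc k) B = comm (A^Suc k) B - acomm (A^k) C"
proof -
  define W where "W = A^k"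
  have AW: "W * A = A * W" unfolding W_def by (simp add: power_commutes)
  have AW2: "W * (A * X) = A * (W * X)" for X using AW by (metis mult.assoc)
  have Cd: "C = A*B - B*A" using hC by (simp add: comm_def)
  show ?thesis unfolding Cd comm_def acomm_def W_def[symmetric] power_Suc
    by (simp add: algebra_simps AW AW2)
qed

lemma I1:
  fixes smul :: "complex \<Rightarrow> 'a::ring_1 \<Rightarrow> 'a"
    and A B C :: 'a
  assumes alg: "complex_algebra smul"
    and hC: "comm A B = C"
    and hAC: "comm A C = (\<Sum>i=1..L+1. smul (\<alpha> i) (A ^ i)) + smul \<delta> B + smul \<epsilon> 1
                          + smul \<beta> (acomm A B)"
  shows "A * acomm (A^k) C + acomm (A^k) C * A - acomm (A^Suc k) C
     = acomm (A^Suc k) C + smul \<beta> (acomm (A^k) C) - smul \<delta> (comm (A^k) B)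
       - smul (2*\<beta>) (comm (A^Suc k) B)"
proof -
  define W where "W = A^k"
  have AW: "W * A = A * W" unfolding W_def by (simp add: power_commutes)
  have AW2: "W * (A * X) = A * (W * X)" for X using AW by (metis mult.assoc)
  have Cd: "C = A*B - B*A" using hC by (simp add: comm_def)
  define K where "K = A*C - C*A"
  define N where "N = W*(A*B+B*A) - (A*B+B*A)*W"
  have a: "A * acomm (A^k) C + acomm (A^k) C * A - acomm (A^Suc k) C
      = acomm (A^Suc k) C - (W*K - K*W)"
    unfolding K_def acomm_def W_def[symmetric] power_Suc
    by (simp add: algebra_simps AW AW2)
  define P where "P = (\<Sum>i=1..L+1. smul (\<alpha> i) (A ^ i))"
  have WP: "W * P = P * W"
    unfolding P_def W_def sum_distrib_left sum_distrib_right
    by (rule sum.cong) (auto simp: sm_left[OF alg] sm_right[OF alg] power_commutes power_add[symmetric] add.commute)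
  have We: "W * smul \<epsilon> 1 = smul \<epsilon> 1 * W"
    by (simp add: sm_left[OF alg] sm_right[OF alg])
  have KK: "K = P + smul \<delta> B + smul \<epsilon> 1 + smul \<beta> (A*B+B*A)"
    using hAC unfolding K_def P_def comm_def acomm_def by simp
  have b: "W*K - K*W = smul \<delta> (comm (A^k) B) + smul \<beta> N"
    unfolding KK N_def comm_def W_def[symmetric]
    by (simp add: algebra_simps WP We sm_left[OF alg] sm_right[OF alg] sm_diff[OF alg])
  have c: "acomm (A^k) C - comm (A^Suc k) B - comm (A^Suc k) B = - N"
    unfolding Cd N_def comm_def acomm_def W_def[symmetric] power_Suc
    by (simp add: algebra_simps AW AW2)
  have d: "smul \<beta> N = smul \<beta> (comm (A^Suc k) B) + smul \<beta> (comm (A^Suc k) B) - smul \<beta> (acomm (A^k) C)"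
  proof -
    have "N = comm (A^Suc k) B + comm (A^Suc k) B - acomm (A^k) C" using c
      by (simp add: algebra_simps)
    then show ?thesis by (simp add: sm_add[OF alg] sm_diff[OF alg])
  qed
  have e: "smul (2*\<beta>) X = smul \<beta> X + smul \<beta> X" for X
  proof -
    have "2*\<beta> = \<beta> + \<beta>" by simp
    then show ?thesis by (simp only: sm_addc[OF alg])
  qed
  have f: "smul (2*\<beta>) (comm (A^Suc k) B) = smul \<beta> (comm (A^Suc k) B) + smul \<beta> (comm (A^Suc k) B)" by (rule e)
  show ?thesis apply (subst a) apply (subst b) apply (subst d) apply (subst f)
    by (simp add: algebra_simps)
qed

lemma sum_shift0: "g 0 = (0::'a::comm_monoid_add) \<Longrightarrow> (\<Sum>i=0..Suc l. g i) = (\<Sum>i=0..l. g (Suc i))"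
  by (simp only: sum.atLeast0_atMost_Suc_shift) simp
lemma sum_drop: "g (Suc l) = (0::'a::comm_monoid_add) \<Longrightarrow> (\<Sum>i=0..Suc l. g i) = (\<Sum>i=0..l. g i)"
  by (simp add: sum.atLeast0_atMost_Suc)

lemma xpart:
  fixes smul :: "complex \<Rightarrow> 'a::ring_1 \<Rightarrow> 'a"
  assumes alg: "complex_algebra smul"
    and x0: "x (Suc l) = 0" and y0: "y (Suc l) = 0"
    and hx: "\<forall>i\<le>Suc l. x' i = (if i = 0 then 0 else x (i-1)) + \<beta> * x i + y i"
  shows "(\<Sum>i=0..Suc l. smul (x' i) (f i))
       = (\<Sum>i=0..l. smul (x i) (f (Suc i)) + smul (x i) (smul \<beta> (f i)) + smul (y i) (f i))"
proof -
  have "(\<Sum>i=0..Suc l. smul (x' i) (f i)) = (\<Sum>i=0..Suc l. smul (if i = 0 then 0 else x (i-1)) (f i)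
      + smul (x i) (smul \<beta> (f i)) + smul (y i) (f i))"
    by (rule sum.cong) (auto simp: hx sm_addc[OF alg] sm_mult[OF alg, symmetric] mult.commute)
  also have "\<dots> = (\<Sum>i=0..Suc l. smul (if i = 0 then 0 else x (i-1)) (f i))
      + (\<Sum>i=0..Suc l. smul (x i) (smul \<beta> (f i))) + (\<Sum>i=0..Suc l. smul (y i) (f i))"
    by (simp add: sum.distrib)
  also have "\<dots> = (\<Sum>i=0..l. smul (x i) (f (Suc i)))
      + (\<Sum>i=0..l. smul (x i) (smul \<beta> (f i))) + (\<Sum>i=0..l. smul (y i) (f i))"
    apply (subst sum_shift0, simp add: sm_zero[OF alg])
    apply (subst sum_drop[of _ l], simp add: x0 sm_zero[OF alg])
    apply (subst sum_drop[of _ l], simp add: y0 sm_zero[OF alg])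
    by simp
  also have "\<dots> = (\<Sum>i=0..l. smul (x i) (f (Suc i)) + smul (x i) (smul \<beta> (f i)) + smul (y i) (f i))"
    by (simp add: sum.distrib)
  finally show ?thesis .
qed

lemma ypart:
  fixes smul :: "complex \<Rightarrow> 'a::ring_1 \<Rightarrow> 'a"
  assumes alg: "complex_algebra smul"
    and x0: "x (Suc l) = 0" and y0: "y (Suc l) = 0"
    and hy: "\<forall>i\<le>Suc l. y' i = \<delta> * x i + 2 * \<beta> * (if i = 0 then 0 else x (i-1)) + (if i = 0 then 0 else y (i-1))"
  shows "(\<Sum>i=0..Suc l. smul (y' i) (f i))
       = (\<Sum>i=0..l. smul (x i) (smul \<delta> (f i)) + smul (x i) (smul (2*\<beta>) (f (Suc i))) + smul (y i) (f (Suc i)))"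
proof -
  have "(\<Sum>i=0..Suc l. smul (y' i) (f i)) = (\<Sum>i=0..Suc l. smul (x i) (smul \<delta> (f i))
      + smul (if i = 0 then 0 else x (i-1)) (smul (2*\<beta>) (f i)) + smul (if i = 0 then 0 else y (i-1)) (f i))"
    by (rule sum.cong) (auto simp: hy sm_addc[OF alg] sm_mult[OF alg, symmetric] mult.commute sm_zero[OF alg])
  also have "\<dots> = (\<Sum>i=0..Suc l. smul (x i) (smul \<delta> (f i)))
      + (\<Sum>i=0..Suc l. smul (if i = 0 then 0 else x (i-1)) (smul (2*\<beta>) (f i)))
      + (\<Sum>i=0..Suc l. smul (if i = 0 then 0 else y (i-1)) (f i))"
    by (simp add: sum.distrib)
  also have "\<dots> = (\<Sum>i=0..l. smul (x i) (smul \<delta> (f i)))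
      + (\<Sum>i=0..l. smul (x i) (smul (2*\<beta>) (f (Suc i)))) + (\<Sum>i=0..l. smul (y i) (f (Suc i)))"
    apply (subst sum_drop[of _ l], simp add: x0 sm_zero[OF alg])
    apply (subst sum_shift0[of _ l], simp add: sm_zero[OF alg])
    apply (subst sum_shift0[of _ l], simp add: sm_zero[OF alg])
    by simp
  also have "\<dots> = (\<Sum>i=0..l. smul (x i) (smul \<delta> (f i)) + smul (x i) (smul (2*\<beta>) (f (Suc i))) + smul (y i) (f (Suc i)))"
    by (simp add: sum.distrib)
  finally show ?thesis .
qed

lemma step:
  fixes smul :: "complex \<Rightarrow> 'a::ring_1 \<Rightarrow> 'a"
    and A B C :: 'a
  assumes alg: "complex_algebra smul"
    and hC: "comm A B = C"
    and hAC: "comm A C = (\<Sum>i=1..L+1. smul (\<alpha> i) (A ^ i)) + smul \<delta> B + smul \<epsilon> 1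
                          + smul \<beta> (acomm A B)"
    and x0: "x (Suc l) = 0" and y0: "y (Suc l) = 0"
    and hx: "\<forall>i\<le>Suc l. x' i = (if i = 0 then 0 else x (i-1)) + \<beta> * x i + y i"
    and hy: "\<forall>i\<le>Suc l. y' i = \<delta> * x i + 2 * \<beta> * (if i = 0 then 0 else x (i-1)) + (if i = 0 then 0 else y (i-1))"
  shows "A * Rg smul A B C x y l m + Rg smul A B C x y l m * A - Rg smul A B C x y l (Suc m)
     = Rg smul A B C x' y' (Suc l) m"
proof -
  have L: "A * Rg smul A B C x y l m + Rg smul A B C x y l m * A - Rg smul A B C x y l (Suc m)
     = (\<Sum>i=0..l. smul (x i) (A * acomm (A^(m+i)) C + acomm (A^(m+i)) C * A - acomm (A^Suc (m+i)) C)
          - smul (y i) (A * comm (A^(m+i)) B + comm (A^(m+i)) B * A - comm (A^Suc (m+i)) B))"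
    unfolding Rg_def
    by (simp add: sum_distrib_left sum_distrib_right sm_left[OF alg] sm_right[OF alg] sm_add[OF alg]
        sm_diff[OF alg] sum_subtractf sum.distrib algebra_simps)
  also have "\<dots> = (\<Sum>i=0..l. smul (x i) (acomm (A^Suc (m+i)) C + smul \<beta> (acomm (A^(m+i)) C)
          - smul \<delta> (comm (A^(m+i)) B) - smul (2*\<beta>) (comm (A^Suc (m+i)) B))
          - smul (y i) (comm (A^Suc (m+i)) B - acomm (A^(m+i)) C))"
    by (simp only: I1[OF alg hC hAC] I2[OF hC])
  also have "\<dots> = (\<Sum>i=0..l. smul (x i) (acomm (A^(m+Suc i)) C) + smul (x i) (smul \<beta> (acomm (A^(m+i)) C)) + smul (y i) (acomm (A^(m+i)) C))
     - (\<Sum>i=0..l. smul (x i) (smul \<delta> (comm (A^(m+i)) B)) + smul (x i) (smul (2*\<beta>) (comm (A^(m+Suc i)) B)) + smul (y i) (comm (A^(m+Suc i)) B))"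
    unfolding sum_subtractf[symmetric]
    by (rule sum.cong) (simp_all add: sm_add[OF alg] sm_diff[OF alg] algebra_simps)
  also have "\<dots> = Rg smul A B C x' y' (Suc l) m"
    unfolding Rg_def
    using xpart[OF alg x0 y0 hx, of "\<lambda>i. acomm (A^(m+i)) C"]
      ypart[OF alg x0 y0 hy, of "\<lambda>i. comm (A^(m+i)) B"] by simp
  finally show ?thesis .
qed

lemma xc_zero: assumes "l < i" shows "xc \<beta> \<delta> i l = 0 \<and> yc \<beta> \<delta> i l = 0"
  proof (cases l)
  case (Suc k) then show ?thesis using assms by (cases k) auto
qed simp

lemma S_step:
  fixes A C :: "'a::ring_1"
  shows "A^m * C * A^Suc l + A^Suc l * C * A^m
    = A * (A^m * C * A^l + A^l * C * A^m) + (A^m * C * A^l + A^l * C * A^m) * A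
      - (A^Suc m * C * A^l + A^l * C * A^Suc m)"
  by (simp add: algebra_simps power_commutes mult.assoc)

theorem lemma3:
  fixes smul :: "complex \<Rightarrow> 'a::ring_1 \<Rightarrow> 'a"
    and A B C :: 'a
    and L :: nat
    and \<alpha> :: "nat \<Rightarrow> complex"
    and \<beta> \<delta> \<epsilon> :: complex
  assumes alg: "complex_algebra smul"
    and hC: "comm A B = C"
    and hAC: "comm A C = (\<Sum>i=1..L+1. smul (\<alpha> i) (A ^ i)) + smul \<delta> B + smul \<epsilon> 1
                          + smul \<beta> (acomm A B)"
  shows "\<forall>m l::nat. 1 \<le> l \<and> l \<le> m \<longrightarrow>
           A ^ m * C * A ^ l + A ^ l * C * A ^ m =
             (\<Sum>i=0..l. smul (xc \<beta> \<delta> i l) (acomm (A ^ (m + i)) C))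
           - (\<Sum>n=0..l. smul (yc \<beta> \<delta> n l) (comm (A ^ (m + n)) B))"
proof -
  define xx where "xx l i = (if l = 0 then (if i = 0 then 1 else 0) else xc \<beta> \<delta> i l)" for l i
  define yy where "yy l i = (if l = 0 then 0 else yc \<beta> \<delta> i l)" for l i
  have x0: "xx l (Suc l) = 0" "yy l (Suc l) = 0" for l
    using xc_zero[of l "Suc l" \<beta> \<delta>] by (auto simp: xx_def yy_def)
  have hx: "\<forall>i\<le>Suc l. xx (Suc l) i = (if i = 0 then 0 else xx l (i-1)) + \<beta> * xx l i + yy l i" for l
  proof (cases l)
    case 0 then show ?thesis by (auto simp: xx_def yy_def le_Suc_eq)
  next
    case (Suc k) then show ?thesis by (auto simp: xx_def yy_def split: nat.split)
  qed
  have hy: "\<forall>i\<le>Suc l. yy (Suc l) i = \<delta> * xx l i + 2 * \<beta> * (if i = 0 then 0 else xx l (i-1)) + (if i = 0 then 0 else yy l (i-1))" for l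
  proof (cases l)
    case 0 then show ?thesis by (auto simp: xx_def yy_def le_Suc_eq)
  next
    case (Suc k) then show ?thesis by (auto simp: xx_def yy_def split: nat.split)
  qed
  have sm1: "smul 1 X = X" for X using alg unfolding complex_algebra_def by blast
  have main: "\<forall>m. A ^ m * C * A ^ l + A ^ l * C * A ^ m = Rg smul A B C (xx l) (yy l) l m" for l
  proof (induction l)
    case 0
    show ?case by (simp add: Rg_def xx_def yy_def sm1 sm_zero[OF alg] acomm_def)
  next
    case (Suc l)
    show ?case
    proof
      fix m
      show "A ^ m * C * A ^ Suc l + A ^ Suc l * C * A ^ m = Rg smul A B C (xx (Suc l)) (yy (Suc l)) (Suc l) m"
        unfolding S_step Suc.IH[rule_format]
        by (rule step[OF alg hC hAC x0 hx hy])
    qed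
  qed
  show ?thesis
  proof (intro allI impI)
    fix m l :: nat assume "1 \<le> l \<and> l \<le> m"
    then have "l \<noteq> 0" by simp
    then show "A ^ m * C * A ^ l + A ^ l * C * A ^ m =
             (\<Sum>i=0..l. smul (xc \<beta> \<delta> i l) (acomm (A ^ (m + i)) C))
           - (\<Sum>n=0..l. smul (yc \<beta> \<delta> n l) (comm (A ^ (m + n)) B))"
      using main[of l] by (simp add: Rg_def xx_def yy_def)
  qed
qed

end
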